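(* Let $T\ge1$ be an integer and assume $\psi_{A,a}>\psi_{A,b}$ and $\psi_{B,b}>\psi_{B,a}$. Then the point $(\theta_{A,a},\theta_{B,a})=(0,1)$ (i.e., $\theta_{A,b}=1$ and $\theta_{B,a}=1$: every user of each group is initially shown the article of the other group) is not a maximizer of $$J(\theta_{A,a},\theta_{B,a})=\sum_{t=1}^T\sum_{g\in\{A,B\}}\sum_{s\in\{a,b\}} l_{g,s}(t,\theta)$$ over $[0,1]^2$, where $\theta_{A,b}=1-\theta_{A,a}$ and $\theta_{B,b}=1-\theta_{B,a}$.
   Context: Groups are $g\in\{A,B\}$; for a group $g$, $g'$ denotes the other group. Articles are $s\in\{a,b\}$. Parameters: $\pi_A=\pi\in(0,1)$, $\pi_B=1-\pi$; $q_A,q_B\in(\tfrac12,1)$; for each $g,s$ a real number $\psi_{g,s}\in(0,1)$. For fixed $s$, given $\theta_{A,s},\theta_{B,s}\in[0,1]$, the mass function is defined recursively for both groups by $l_{g,s}(1,\theta)=\pi_g\theta_{g,s}\psi_{g,s}$ and $l_{g,s}(t+1,\theta)=\psi_{g,s}\big(q_g l_{g,s}(t,\theta)+(1-q_{g'})l_{g',s}(t,\theta)\big)$ for $t\ge1$. *)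

theory Defs
  imports "HOL-Analysis.Analysis"
begin

datatype grp = GA | GB
datatype art = SA | SB

fun other :: "grp \<Rightarrow> grp" where
  "other GA = GB" | "other GB = GA"

definition pi_g :: "real \<Rightarrow> grp \<Rightarrow> real" where
  "pi_g p g = (if g = GA then p else 1 - p)"

text \<open>Mass function l_{g,s}(t,theta). Parameters: pi, q (per group), psi (per group and
article), theta (per group and article). Time index t starts at 1; the value at t = 0 is
an unused dummy (0).\<close>
fun lmass :: "real \<Rightarrow> (grp \<Rightarrow> real) \<Rightarrow> (grp \<Rightarrow> art \<Rightarrow> real) \<Rightarrow> (grp \<Rightarrow> art \<Rightarrow> real)
    \<Rightarrow> nat \<Rightarrow> grp \<Rightarrow> art \<Rightarrow> real" where
  "lmass p q psi th 0 g s = 0"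
| "lmass p q psi th (Suc 0) g s = pi_g p g * th g s * psi g s"
| "lmass p q psi th (Suc (Suc t)) g s =
     psi g s * (q g * lmass p q psi th (Suc t) g s
                + (1 - q (other g)) * lmass p q psi th (Suc t) (other g) s)"

definition theta_of :: "real \<Rightarrow> real \<Rightarrow> grp \<Rightarrow> art \<Rightarrow> real" where
  "theta_of x y g s = (let v = (if g = GA then x else y) in if s = SA then v else 1 - v)"

definition Jobj :: "real \<Rightarrow> (grp \<Rightarrow> real) \<Rightarrow> (grp \<Rightarrow> art \<Rightarrow> real) \<Rightarrow> nat \<Rightarrow> real \<Rightarrow> real \<Rightarrow> real" where
  "Jobj p q psi T x y = (\<Sum>t\<in>{1..T}. \<Sum>g\<in>{GA, GB}. \<Sum>s\<in>{SA, SB}. lmass p q psi (theta_of x y) t g s)"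

end

theory Submission
  imports Defs
begin

fun F :: "(grp \<Rightarrow> real) \<Rightarrow> (grp \<Rightarrow> real) \<Rightarrow> (grp \<Rightarrow> real) \<Rightarrow> nat \<Rightarrow> grp \<Rightarrow> real" where
  "F ps q w 0 g = w g"
| "F ps q w (Suc t) g = ps g * (q g * F ps q w t g + (1 - q (other g)) * F ps q w t (other g))"

definition S :: "(grp \<Rightarrow> real) \<Rightarrow> (grp \<Rightarrow> real) \<Rightarrow> (grp \<Rightarrow> real) \<Rightarrow> nat \<Rightarrow> real" where
  "S ps q w n = (\<Sum>t<n. F ps q w t GA + F ps q w t GB)"

definition e :: "grp \<Rightarrow> grp \<Rightarrow> real" where
  "e g = (\<lambda>h. if h = g then 1 else 0)"

definition W :: "(grp \<Rightarrow> real) \<Rightarrow> (grp \<Rightarrow> real) \<Rightarrow> grp \<Rightarrow> nat \<Rightarrow> real" where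
  "W ps q g n = ps g * S ps q (e g) n"

lemma lm: "lmass p q psi th (Suc t) g s = F (\<lambda>h. psi h s) q (\<lambda>h. pi_g p h * th h s * psi h s) t g"
  by (induction t arbitrary: g) auto

lemma F_lin: "F ps q (\<lambda>g. a * u g + b * v g) t g = a * F ps q u t g + b * F ps q v t g"
  by (induction t arbitrary: g) (auto simp: algebra_simps)

lemma F_shift: "F ps q w (Suc t) g = F ps q (\<lambda>h. F ps q w (Suc 0) h) t g"
  by (induction t arbitrary: g) auto

lemma S_Suc: "S ps q w (Suc n) = w GA + w GB + S ps q (\<lambda>h. F ps q w (Suc 0) h) n"
  unfolding S_def sum.lessThan_Suc_shift
  by (simp del: F.simps(2) add: F_shift[symmetric])

lemma S_lin: "S ps q (\<lambda>g. a * u g + b * v g) n = a * S ps q u n + b * S ps q v n"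
  unfolding S_def by (simp add: F_lin sum.distrib sum_distrib_left algebra_simps)

lemma w_decomp: "w = (\<lambda>h. w GA * e GA h + w GB * e GB h)"
  by (rule ext, case_tac h) (auto simp: e_def)

lemma S_decomp: "S ps q w n = w GA * S ps q (e GA) n + w GB * S ps q (e GB) n"
  by (subst w_decomp) (rule S_lin)

lemma F_nonneg:
  assumes "\<And>g. ps g \<ge> 0" "\<And>g. 0 \<le> q g \<and> q g \<le> 1" "\<And>g. w g \<ge> 0"
  shows "F ps q w t g \<ge> 0"
  using assms
proof (induction t arbitrary: g)
  case 0 then show ?case by simp
next
  case (Suc t)
  have a: "F ps q w t g \<ge> 0" "F ps q w t (other g) \<ge> 0" using Suc by auto
  have "0 \<le> q g" "0 \<le> 1 - q (other g)" using Suc.prems(2) by (auto simp: algebra_simps)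
  then show ?case using a Suc.prems(1)[of g] by simp
qed

lemma S_nonneg:
  assumes "\<And>g. ps g \<ge> 0" "\<And>g. 0 \<le> q g \<and> q g \<le> 1" "\<And>g. w g \<ge> 0"
  shows "S ps q w n \<ge> 0"
  unfolding S_def using F_nonneg[OF assms] by (simp add: sum_nonneg add_nonneg_nonneg)

lemma W_nonneg:
  assumes "\<And>g. ps g \<ge> 0" "\<And>g. 0 \<le> q g \<and> q g \<le> 1"
  shows "W ps q g n \<ge> 0"
  unfolding W_def using S_nonneg[OF assms, of "e g"] assms(1)[of g] by (simp add: e_def)

lemma W_rec_A: "W ps q GA (Suc n) = ps GA * (1 + q GA * W ps q GA n + (1 - q GA) * W ps q GB n)"
proof -
  have st: "(\<lambda>h. F ps q (e GA) (Suc 0) h) = (\<lambda>h. (ps GA * q GA) * e GA h + (ps GB * (1 - q GA)) * e GB h)"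
    by (rule ext, case_tac h) (auto simp: e_def)
  show ?thesis unfolding W_def S_Suc st S_lin by (simp add: e_def algebra_simps)
qed

lemma W_rec_B: "W ps q GB (Suc n) = ps GB * (1 + q GB * W ps q GB n + (1 - q GB) * W ps q GA n)"
proof -
  have st: "(\<lambda>h. F ps q (e GB) (Suc 0) h) = (\<lambda>h. (ps GA * (1 - q GB)) * e GA h + (ps GB * q GB) * e GB h)"
    by (rule ext, case_tac h) (auto simp: e_def)
  show ?thesis unfolding W_def S_Suc st S_lin by (simp add: e_def algebra_simps)
qed

lemma W0: "W ps q g 0 = 0" by (simp add: W_def S_def)

lemma key:
  fixes pa pb :: "grp \<Rightarrow> real" and q :: "grp \<Rightarrow> real"
  assumes q: "\<And>g. 1/2 < q g \<and> q g < 1"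
    and pa: "\<And>g. 0 < pa g" and pb: "\<And>g. 0 < pb g"
    and ab: "pa GA > pb GA" and ba: "pb GB > pa GB"
  shows "W pa q GA (Suc n) - W pb q GA (Suc n) > 0 \<or> W pb q GB (Suc n) - W pa q GB (Suc n) > 0"
proof (induction n)
  case 0
  show ?case using ab by (simp add: W_rec_A W0)
next
  case (Suc n)
  let ?m = "Suc n"
  define DA where "DA = W pa q GA ?m - W pb q GA ?m"
  define DB where "DB = W pb q GB ?m - W pa q GB ?m"
  have qq: "0 \<le> q g \<and> q g \<le> 1" for g using q[of g] by linarith
  have nn: "W pa q g ?m \<ge> 0" "W pb q g ?m \<ge> 0" for g
  proof -
    have "pa h \<ge> 0" "pb h \<ge> 0" for h using pa[of h] pb[of h] by auto
    then show "W pa q g ?m \<ge> 0" "W pb q g ?m \<ge> 0" using W_nonneg qq by blast+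
  qed
  have k1: "(pa GA - pb GA) * (1 + q GA * W pa q GA ?m + (1 - q GA) * W pa q GB ?m) > 0"
    using ab nn q[of GA] by (intro mult_pos_pos) (auto intro!: add_pos_nonneg)
  have k2: "(pb GB - pa GB) * (1 + q GB * W pb q GB ?m + (1 - q GB) * W pb q GA ?m) > 0"
    using ba nn q[of GB] by (intro mult_pos_pos) (auto intro!: add_pos_nonneg)
  have eA: "W pa q GA (Suc ?m) - W pb q GA (Suc ?m) =
     (pa GA - pb GA) * (1 + q GA * W pa q GA ?m + (1 - q GA) * W pa q GB ?m)
     + pb GA * (q GA * DA - (1 - q GA) * DB)"
    unfolding W_rec_A DA_def DB_def by (simp add: algebra_simps)
  have eB: "W pb q GB (Suc ?m) - W pa q GB (Suc ?m) =
     (pb GB - pa GB) * (1 + q GB * W pb q GB ?m + (1 - q GB) * W pb q GA ?m)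
     + pa GB * (q GB * DB - (1 - q GB) * DA)"
    unfolding W_rec_B DA_def DB_def by (simp add: algebra_simps)
  have IH: "DA > 0 \<or> DB > 0" using Suc DA_def DB_def by simp
  have qA: "1/2 < q GA" "q GA < 1" and qB: "1/2 < q GB" "q GB < 1" using q by auto
  show ?case
  proof (cases "DB \<le> 0")
    case True
    then have "DA > 0" using IH by simp
    then have "q GA * DA \<ge> 0" "(1 - q GA) * DB \<le> 0" using True qA
      by (auto intro!: mult_nonneg_nonpos)
    then have "q GA * DA - (1 - q GA) * DB \<ge> 0" by linarith
    then have "pb GA * (q GA * DA - (1 - q GA) * DB) \<ge> 0" using pb[of GA] by simp
    then show ?thesis using eA k1 by simp
  next
    case False
    show ?thesis
    proof (cases "DA \<le> 0")
      case True
      then have "q GB * DB \<ge> 0" "(1 - q GB) * DA \<le> 0" using False qB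
        by (auto intro!: mult_nonneg_nonpos)
      then have "q GB * DB - (1 - q GB) * DA \<ge> 0" by linarith
      then have "pa GB * (q GB * DB - (1 - q GB) * DA) \<ge> 0" using pa[of GB] by simp
      then show ?thesis using eB k2 by simp
    next
      case F2: False
      show ?thesis
      proof (rule ccontr)
        assume "\<not> ?thesis"
        then have "pb GA * (q GA * DA - (1 - q GA) * DB) < 0" "pa GB * (q GB * DB - (1 - q GB) * DA) < 0"
          using eA eB k1 k2 by linarith+
        then have c1: "q GA * DA < (1 - q GA) * DB" and c2: "q GB * DB < (1 - q GB) * DA"
          using pa[of GB] pb[of GA] by (auto simp: mult_less_0_iff)
        have "q GA * DA * (q GB * DB) < (1 - q GA) * DB * ((1 - q GB) * DA)"
          by (rule mult_strict_mono[OF c1 c2]) (use F2 False qA qB in auto)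
        moreover have "(1 - q GA) * (1 - q GB) = 1 - q GA - q GB + q GA * q GB"
          by (simp add: algebra_simps)
        then have "(1 - q GA) * (1 - q GB) < q GA * q GB"
          using qA qB by linarith
        then have "(1 - q GA) * (1 - q GB) * (DA * DB) < q GA * q GB * (DA * DB)"
          using F2 False by (intro mult_strict_right_mono) auto
        ultimately show False by (simp add: algebra_simps)
      qed
    qed
  qed
qed

lemma sum_shift1: "(\<Sum>t\<in>{1..T}. f t) = (\<Sum>t<T. f (Suc t)) " for f :: "nat \<Rightarrow> real"
  by (induction T) auto

lemma Jobj_formula:
  "Jobj p q psi T x y =
     p * x * W (\<lambda>h. psi h SA) q GA T + (1 - p) * y * W (\<lambda>h. psi h SA) q GB T
   + p * (1 - x) * W (\<lambda>h. psi h SB) q GA T + (1 - p) * (1 - y) * W (\<lambda>h. psi h SB) q GB T"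
proof -
  have "Jobj p q psi T x y = (\<Sum>t<T. \<Sum>g\<in>{GA, GB}. \<Sum>s\<in>{SA, SB}. lmass p q psi (theta_of x y) (Suc t) g s)"
    unfolding Jobj_def by (rule sum_shift1)
  also have "\<dots> = S (\<lambda>h. psi h SA) q (\<lambda>h. pi_g p h * theta_of x y h SA * psi h SA) T
               + S (\<lambda>h. psi h SB) q (\<lambda>h. pi_g p h * theta_of x y h SB * psi h SB) T"
    unfolding S_def lm by (simp add: sum.distrib algebra_simps)
  also have "\<dots> = p * x * W (\<lambda>h. psi h SA) q GA T + (1 - p) * y * W (\<lambda>h. psi h SA) q GB T
   + p * (1 - x) * W (\<lambda>h. psi h SB) q GA T + (1 - p) * (1 - y) * W (\<lambda>h. psi h SB) q GB T"
    apply (subst (1 2) S_decomp)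
    by (simp add: W_def pi_g_def theta_of_def algebra_simps)
  finally show ?thesis .
qed

theorem corollary1:
  fixes p :: real and q :: "grp \<Rightarrow> real" and psi :: "grp \<Rightarrow> art \<Rightarrow> real" and T :: nat
  assumes "0 < p" "p < 1"
    and "\<And>g. 1/2 < q g \<and> q g < 1"
    and "\<And>g s. 0 < psi g s \<and> psi g s < 1"
    and "T \<ge> 1"
    and "psi GA SA > psi GA SB" and "psi GB SB > psi GB SA"
  shows "\<not> (\<forall>x\<in>{0..1}. \<forall>y\<in>{0..1}. Jobj p q psi T x y \<le> Jobj p q psi T 0 1)"
proof
  assume H: "\<forall>x\<in>{0..1}. \<forall>y\<in>{0..1}. Jobj p q psi T x y \<le> Jobj p q psi T 0 1"
  obtain n where n: "T = Suc n" using assms(5) by (cases T) auto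
  have k: "W (\<lambda>h. psi h SA) q GA T - W (\<lambda>h. psi h SB) q GA T > 0 \<or>
           W (\<lambda>h. psi h SB) q GB T - W (\<lambda>h. psi h SA) q GB T > 0"
    unfolding n by (rule key) (use assms in auto)
  have h1: "Jobj p q psi T 1 1 \<le> Jobj p q psi T 0 1" and h2: "Jobj p q psi T 0 0 \<le> Jobj p q psi T 0 1"
    using H by auto
  have "p * (W (\<lambda>h. psi h SA) q GA T - W (\<lambda>h. psi h SB) q GA T) \<le> 0"
    using h1 unfolding Jobj_formula by (simp add: algebra_simps)
  moreover have "(1 - p) * (W (\<lambda>h. psi h SB) q GB T - W (\<lambda>h. psi h SA) q GB T) \<le> 0"
    using h2 unfolding Jobj_formula by (simp add: algebra_simps)
  ultimately show False using k assms(1,2)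
    by (smt (verit) mult_pos_pos)
qed

end
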